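(* For all $n\ge1$, $a_{\{0101,0102\}}(n)=a_{\{0101,0121\}}(n)=F_{2n-1}$, where $F_1=F_2=1$ and $F_k=F_{k-1}+F_{k-2}$ for $k\ge3$ are the Fibonacci numbers.
   Context: An ascent in an integer sequence $s_1\cdots s_m$ is an index $j$ with $s_j<s_{j+1}$; $\mathrm{asc}$ denotes the number of ascents. An ascent sequence is a sequence $x_1\cdots x_n$ of nonnegative integers with $x_1=0$ and $x_i\le 1+\mathrm{asc}(x_1\cdots x_{i-1})$ for all $i\ge2$. The reduction $\mathrm{red}(w)$ of an integer sequence $w$ replaces the $i$-th smallest distinct letter of $w$ by $i-1$; a pattern is a reduced sequence. A sequence $x$ contains a pattern $p=p_1\cdots p_k$ if there are indices $i_1<\cdots<i_k$ with $\mathrm{red}(x_{i_1}\cdots x_{i_k})=p$; otherwise $x$ avoids $p$. For a finite set $P$ of patterns, $a_P(n)$ denotes the number of ascent sequences of length $n$ avoiding every pattern in $P$. *)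

theory Defs
  imports Main "HOL-Number_Theory.Fib"
begin

definition asc :: "nat list \<Rightarrow> nat" where
  "asc s = card {j. Suc j < length s \<and> s ! j < s ! Suc j}"

definition ascent_seq :: "nat list \<Rightarrow> bool" where
  "ascent_seq x \<longleftrightarrow> x \<noteq> [] \<and> x ! 0 = 0 \<and>
     (\<forall>i. 0 < i \<and> i < length x \<longrightarrow> x ! i \<le> 1 + asc (take i x))"

(* reduction: the i-th smallest distinct letter is replaced by i-1 *)
definition red :: "nat list \<Rightarrow> nat list" where
  "red w = map (\<lambda>a. card {b \<in> set w. b < a}) w"

definition contains :: "nat list \<Rightarrow> nat list \<Rightarrow> bool" where
  "contains x p \<longleftrightarrow> (\<exists>I. red (nths x I) = p)"

definition avoids :: "nat list \<Rightarrow> nat list \<Rightarrow> bool" where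
  "avoids x p \<longleftrightarrow> \<not> contains x p"

definition a_P :: "nat list set \<Rightarrow> nat \<Rightarrow> nat" where
  "a_P P n = card {x. ascent_seq x \<and> length x = n \<and> (\<forall>p\<in>P. avoids x p)}"

end

theory Submission
  imports Defs "HOL-Library.Sublist"
begin

lemma red_less:
  assumes "i < length w" "j < length w"
  shows "(red w ! i < red w ! j) \<longleftrightarrow> (w!i < w!j)"
proof -
  have ri: "red w ! i = card {b \<in> set w. b < w!i}" and rj: "red w ! j = card {b \<in> set w. b < w!j}"
    using assms by (simp_all add: red_def)
  show ?thesis
  proof
    assume "red w ! i < red w ! j"
    show "w!i < w!j"
    proof (rule ccontr)
      assume "\<not> w!i < w!j"
      then have "{b \<in> set w. b < w!j} \<subseteq> {b \<in> set w. b < w!i}" by auto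
      then have "card {b \<in> set w. b < w!j} \<le> card {b \<in> set w. b < w!i}"
        by (rule card_mono[rotated]) simp
      with \<open>red w ! i < red w ! j\<close> ri rj show False by simp
    qed
  next
    assume h: "w!i < w!j"
    have sub: "{b \<in> set w. b < w!i} \<subseteq> {b \<in> set w. b < w!j}" using h by auto
    have m: "w!i \<in> set w" using assms(1) by (rule nth_mem)
    have "w!i \<in> {b \<in> set w. b < w!j}" "w!i \<notin> {b \<in> set w. b < w!i}" using h m by simp_all
    then have "{b \<in> set w. b < w!i} \<subset> {b \<in> set w. b < w!j}" using sub by blast
    then have "card {b \<in> set w. b < w!i} < card {b \<in> set w. b < w!j}"
      by (rule psubset_card_mono[rotated]) simp
    with ri rj show "red w ! i < red w ! j" by simp
  qed
qed

lemma red_eq: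
  assumes "i < length w" "j < length w"
  shows "(red w ! i = red w ! j) \<longleftrightarrow> (w!i = w!j)"
proof -
  have "(red w ! i = red w ! j) \<longleftrightarrow> \<not>(red w!i < red w!j) \<and> \<not>(red w!j < red w!i)" by auto
  also have "\<dots> \<longleftrightarrow> \<not>(w!i < w!j) \<and> \<not>(w!j < w!i)" using red_less[OF assms] red_less[OF assms(2,1)] by simp
  also have "\<dots> \<longleftrightarrow> w!i = w!j" by auto
  finally show ?thesis .
qed

lemma len4: "length w = 4 \<Longrightarrow> \<exists>a b c d. w = [a,b,c,d]"
  by (auto simp: numeral_eq_Suc length_Suc_conv)

lemma red_0101: assumes "a < b" shows "red [a,b,a,b] = [0,1,0,1]"
proof -
  have s: "set [a,b,a,b] = {a,b}" by auto
  have 1: "{y \<in> {a,b}. y < a} = {}" using assms by auto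
  have 2: "{y \<in> {a,b}. y < b} = {a}" using assms by auto
  show ?thesis unfolding red_def s by (simp only: list.map 1 2) simp
qed

lemma red_0102: assumes "a < b" "b < c" shows "red [a,b,a,c] = [0,1,0,2]"
proof -
  have s: "set [a,b,a,c] = {a,b,c}" by auto
  have 1: "{y \<in> {a,b,c}. y < a} = {}" using assms by auto
  have 2: "{y \<in> {a,b,c}. y < b} = {a}" using assms by auto
  have 3: "{y \<in> {a,b,c}. y < c} = {a,b}" using assms by auto
  show ?thesis unfolding red_def s using assms by (simp only: list.map 1 2 3) simp
qed

lemma red_0121: assumes "a < b" "b < c" shows "red [a,b,c,b] = [0,1,2,1]"
proof -
  have s: "set [a,b,c,b] = {a,b,c}" by auto
  have 1: "{y \<in> {a,b,c}. y < a} = {}" using assms by auto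
  have 2: "{y \<in> {a,b,c}. y < b} = {a}" using assms by auto
  have 3: "{y \<in> {a,b,c}. y < c} = {a,b}" using assms by auto
  show ?thesis unfolding red_def s using assms by (simp only: list.map 1 2 3) simp
qed

lemma contains_iff: "contains x p \<longleftrightarrow> (\<exists>w. subseq w x \<and> red w = p)"
  unfolding contains_def subseq_conv_nths by metis

lemma c0101: "contains x [0,1,0,1] \<longleftrightarrow> (\<exists>a b. a < b \<and> subseq [a,b,a,b] x)"
proof
  assume "contains x [0,1,0,1]"
  then obtain w where w: "subseq w x" "red w = [0,1,0,1]" by (auto simp: contains_iff)
  have l: "length w = 4" using arg_cong[OF w(2), of length] by (simp add: red_def)
  obtain p q r t where wd: "w = [p,q,r,t]" using len4[OF l] by metis
  have f0: "w!0 < w!1" using red_less[of 0 w 1] l w(2) by simp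
  have f1: "w!2 = w!0" using red_eq[of 2 w 0] l w(2) by simp
  have f2: "w!3 = w!1" using red_eq[of 3 w 1] l w(2) by simp
  have f: "w!0 < w!1" "w!2 = w!0" "w!3 = w!1" using f0 f1 f2
    by auto
  note f = f[unfolded wd, simplified]
  show "\<exists>a b. a < b \<and> subseq [a,b,a,b] x" using w(1) f unfolding wd by (intro exI[of _ p] exI[of _ q]) simp
next
  assume "\<exists>a b. a < b \<and> subseq [a,b,a,b] x"
  then obtain a b where h: "a < b \<and> subseq [a,b,a,b] x" by blast
  then have "red [a,b,a,b] = [0,1,0,1]" by (intro red_0101) auto
  then show "contains x [0,1,0,1]" unfolding contains_iff using h by blast
qed

lemma c0102: "contains x [0,1,0,2] \<longleftrightarrow> (\<exists>a b c. a < b \<and> b < c \<and> subseq [a,b,a,c] x)"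
proof
  assume "contains x [0,1,0,2]"
  then obtain w where w: "subseq w x" "red w = [0,1,0,2]" by (auto simp: contains_iff)
  have l: "length w = 4" using arg_cong[OF w(2), of length] by (simp add: red_def)
  obtain p q r t where wd: "w = [p,q,r,t]" using len4[OF l] by metis
  have f0: "w!0 < w!1" using red_less[of 0 w 1] l w(2) by simp
  have f1: "w!2 = w!0" using red_eq[of 2 w 0] l w(2) by simp
  have f2: "w!1 < w!3" using red_less[of 1 w 3] l w(2) by simp
  have f: "w!0 < w!1" "w!2 = w!0" "w!1 < w!3" using f0 f1 f2
    by auto
  note f = f[unfolded wd, simplified]
  show "\<exists>a b c. a < b \<and> b < c \<and> subseq [a,b,a,c] x" using w(1) f unfolding wd by (intro exI[of _ p] exI[of _ q] exI[of _ t]) auto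
next
  assume "\<exists>a b c. a < b \<and> b < c \<and> subseq [a,b,a,c] x"
  then obtain a b c where h: "a < b \<and> b < c \<and> subseq [a,b,a,c] x" by blast
  then have "red [a,b,a,c] = [0,1,0,2]" by (intro red_0102) auto
  then show "contains x [0,1,0,2]" unfolding contains_iff using h by blast
qed

lemma c0121: "contains x [0,1,2,1] \<longleftrightarrow> (\<exists>a b c. a < b \<and> b < c \<and> subseq [a,b,c,b] x)"
proof
  assume "contains x [0,1,2,1]"
  then obtain w where w: "subseq w x" "red w = [0,1,2,1]" by (auto simp: contains_iff)
  have l: "length w = 4" using arg_cong[OF w(2), of length] by (simp add: red_def)
  obtain p q r t where wd: "w = [p,q,r,t]" using len4[OF l] by metis
  have f0: "w!0 < w!1" using red_less[of 0 w 1] l w(2) by simp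
  have f1: "w!1 < w!2" using red_less[of 1 w 2] l w(2) by simp
  have f2: "w!3 = w!1" using red_eq[of 3 w 1] l w(2) by simp
  have f: "w!0 < w!1" "w!1 < w!2" "w!3 = w!1" using f0 f1 f2
    by auto
  note f = f[unfolded wd, simplified]
  show "\<exists>a b c. a < b \<and> b < c \<and> subseq [a,b,c,b] x" using w(1) f unfolding wd by (intro exI[of _ p] exI[of _ q] exI[of _ r]) auto
next
  assume "\<exists>a b c. a < b \<and> b < c \<and> subseq [a,b,c,b] x"
  then obtain a b c where h: "a < b \<and> b < c \<and> subseq [a,b,c,b] x" by blast
  then have "red [a,b,c,b] = [0,1,2,1]" by (intro red_0121) auto
  then show "contains x [0,1,2,1]" unfolding contains_iff using h by blast
qed


lemma subseq_single: "subseq zs [v] \<Longrightarrow> zs = [] \<or> zs = [v]"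
  by (cases zs) (auto split: if_splits dest: list_emb_Nil2)

lemma subseq_snoc: "subseq (xs@[c]) (ys@[v]) \<Longrightarrow> subseq (xs@[c]) ys \<or> (c = v \<and> subseq xs ys)"
proof -
  assume "subseq (xs@[c]) (ys@[v])"
  then obtain xs1 xs2 where h: "xs@[c] = xs1 @ xs2" "subseq xs1 ys" "subseq xs2 [v]"
    by (rule subseq_appendE)
  from subseq_single[OF h(3)] show ?thesis
  proof
    assume "xs2 = []" then show ?thesis using h by simp
  next
    assume "xs2 = [v]" then show ?thesis using h by simp
  qed
qed

lemma snoc3: "subseq [a,b,c] (ys@[v]) \<Longrightarrow> subseq [a,b,c] ys \<or> (c = v \<and> subseq [a,b] ys)"
  using subseq_snoc[of "[a,b]" c ys v] by simp

lemma snoc4: "subseq [a,b,c,d] (ys@[v]) \<Longrightarrow> subseq [a,b,c,d] ys \<or> (d = v \<and> subseq [a,b,c] ys)"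
  using subseq_snoc[of "[a,b,c]" d ys v] by simp

lemma sub_app: "subseq xs ys \<Longrightarrow> subseq xs (ys@[v])"
  by (rule subseq_rev_drop_many)

lemma sub_snoc2: "subseq xs ys \<Longrightarrow> subseq (xs@[v]) (ys@[v])"
  by simp

lemma sub_2: "subseq [a] ys \<Longrightarrow> subseq [a,v] (ys@[v])"
  using sub_snoc2[of "[a]" ys v] by simp

lemma sub_3: "subseq [a,b] ys \<Longrightarrow> subseq [a,b,v] (ys@[v])"
  using sub_snoc2[of "[a,b]" ys v] by simp

lemma sub_4: "subseq [a,b,c] ys \<Longrightarrow> subseq [a,b,c,v] (ys@[v])"
  using sub_snoc2[of "[a,b,c]" ys v] by simp

lemma subseq_mem: "subseq xs ys \<Longrightarrow> u \<in> set xs \<Longrightarrow> u \<in> set ys"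
  by (induction rule: list_emb.induct) auto

lemma sorted_subseq: "subseq xs ys \<Longrightarrow> sorted ys \<Longrightarrow> sorted xs"
proof (induction rule: list_emb.induct)
  case (list_emb_Nil ys) then show ?case by simp
next
  case (list_emb_Cons xs ys y) then show ?case by simp
next
  case (list_emb_Cons2 x y xs ys)
  then show ?case by (auto dest: subseq_mem)
qed

lemma asc_snoc:
  assumes "y \<noteq> []"
  shows "asc (y@[v]) = asc y + (if last y < v then 1 else 0)"
proof -
  define S where "S = {j. Suc j < length y \<and> y ! j < y ! Suc j}"
  have eq: "{j. Suc j < length (y@[v]) \<and> (y@[v]) ! j < (y@[v]) ! Suc j}
      = S \<union> {j. Suc j = length y \<and> last y < v}"
  proof (rule set_eqI)
    fix j
    show "j \<in> {j. Suc j < length (y@[v]) \<and> (y@[v]) ! j < (y@[v]) ! Suc j} \<longleftrightarrow>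
          j \<in> S \<union> {j. Suc j = length y \<and> last y < v}"
    proof (cases "Suc j < length y")
      case True
      then show ?thesis by (simp add: S_def nth_append)
    next
      case False
      show ?thesis
      proof (cases "Suc j = length y")
        case True
        then have "j = length y - 1" by simp
        then have "y ! j = last y" using assms by (simp add: last_conv_nth)
        then show ?thesis using True by (simp add: S_def nth_append)
      next
        case False
        then show ?thesis using \<open>\<not> Suc j < length y\<close> by (simp add: S_def)
      qed
    qed
  qed
  have fin: "finite S" unfolding S_def by (rule finite_subset[of _ "{..<length y}"]) auto
  have a1: "asc y = card S" by (simp add: asc_def S_def)
  show ?thesis
  proof (cases "last y < v")
    case True
    have "{j. Suc j = length y \<and> last y < v} = {length y - 1}" using True assms
      by (cases y) auto
    moreover have "length y - 1 \<notin> S" unfolding S_def by auto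
    ultimately show ?thesis using True fin a1 unfolding asc_def eq by simp
  next
    case False
    then show ?thesis using a1 unfolding asc_def eq by simp
  qed
qed

lemma ascent_snoc:
  assumes "y \<noteq> []"
  shows "ascent_seq (y@[v]) \<longleftrightarrow> ascent_seq y \<and> v \<le> 1 + asc y"
proof
  assume h: "ascent_seq (y@[v])"
  have "y ! 0 = 0" using h assms by (simp add: ascent_seq_def nth_append)
  moreover have "y ! i \<le> 1 + asc (take i y)" if "0 < i" "i < length y" for i
    using h that unfolding ascent_seq_def
    by (auto dest!: spec[of _ i] simp: nth_append)
  moreover have "v \<le> 1 + asc y"
    using h unfolding ascent_seq_def by (auto dest!: spec[of _ "length y"] simp: assms)
  ultimately show "ascent_seq y \<and> v \<le> 1 + asc y" using assms by (simp add: ascent_seq_def)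
next
  assume h: "ascent_seq y \<and> v \<le> 1 + asc y"
  show "ascent_seq (y@[v])"
    unfolding ascent_seq_def
  proof (intro conjI allI impI)
    show "y @ [v] \<noteq> []" by simp
    show "(y @ [v]) ! 0 = 0" using h assms by (simp add: ascent_seq_def nth_append)
    fix i assume i: "0 < i \<and> i < length (y @ [v])"
    show "(y @ [v]) ! i \<le> 1 + asc (take i (y @ [v]))"
    proof (cases "i < length y")
      case True
      then show ?thesis using h i by (simp add: ascent_seq_def nth_append)
    next
      case False
      then have "i = length y" using i by simp
      then show ?thesis using h by simp
    qed
  qed
qed

lemma ascent_single: "ascent_seq [v] \<longleftrightarrow> v = 0"
  by (simp add: ascent_seq_def)

lemma Max_snoc: "y \<noteq> [] \<Longrightarrow> Max (set (y@[v])) = max v (Max (set y))"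
  by simp

lemma le_Max: "u \<in> set y \<Longrightarrow> u \<le> Max (set y)"
  by simp

definition noA :: "nat list \<Rightarrow> bool" where
  "noA x \<longleftrightarrow> \<not>(\<exists>a b c. a < b \<and> b \<le> c \<and> subseq [a,b,a,c] x)"

definition noB :: "nat list \<Rightarrow> bool" where
  "noB x \<longleftrightarrow> \<not>(\<exists>a b c. a < b \<and> (c = a \<or> b < c) \<and> subseq [a,b,c,b] x)"

lemma avoidsA: "(\<forall>p\<in>{[0,1,0,1],[0,1,0,2]}. avoids x p) \<longleftrightarrow> noA x"
proof -
  have "(\<forall>p\<in>{[0,1,0,1],[0,1,0,2]}. avoids x p) \<longleftrightarrow> \<not>contains x [0,1,0,1] \<and> \<not>contains x [0,1,0,2]"
    unfolding avoids_def by blast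
  also have "\<dots> \<longleftrightarrow> noA x" unfolding c0101 c0102 noA_def le_less by blast
  finally show ?thesis .
qed

lemma avoidsB: "(\<forall>p\<in>{[0,1,0,1],[0,1,2,1]}. avoids x p) \<longleftrightarrow> noB x"
proof -
  have "(\<forall>p\<in>{[0,1,0,1],[0,1,2,1]}. avoids x p) \<longleftrightarrow> \<not>contains x [0,1,0,1] \<and> \<not>contains x [0,1,2,1]"
    unfolding avoids_def by blast
  also have "\<dots> \<longleftrightarrow> noB x" unfolding c0101 c0121 noB_def by blast
  finally show ?thesis .
qed

lemma noA_snoc: "noA (y@[v]) \<longleftrightarrow> noA y \<and> \<not>(\<exists>a b. a < b \<and> b \<le> v \<and> subseq [a,b,a] y)"
proof
  assume h: "noA (y@[v])"
  have "noA y" unfolding noA_def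
  proof
    assume "\<exists>a b c. a < b \<and> b \<le> c \<and> subseq [a,b,a,c] y"
    then obtain a b c where "a < b" "b \<le> c" "subseq [a,b,a,c] y" by blast
    then show False using h sub_app[of "[a,b,a,c]" y v] unfolding noA_def by blast
  qed
  moreover have "\<not>(\<exists>a b. a < b \<and> b \<le> v \<and> subseq [a,b,a] y)"
  proof
    assume "\<exists>a b. a < b \<and> b \<le> v \<and> subseq [a,b,a] y"
    then obtain a b where "a < b" "b \<le> v" "subseq [a,b,a] y" by blast
    then show False using h sub_4[of a b a y v] unfolding noA_def by blast
  qed
  ultimately show "noA y \<and> \<not>(\<exists>a b. a < b \<and> b \<le> v \<and> subseq [a,b,a] y)" by blast
next
  assume h: "noA y \<and> \<not>(\<exists>a b. a < b \<and> b \<le> v \<and> subseq [a,b,a] y)"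
  show "noA (y@[v])" unfolding noA_def
  proof
    assume "\<exists>a b c. a < b \<and> b \<le> c \<and> subseq [a,b,a,c] (y@[v])"
    then obtain a b c where abc: "a < b" "b \<le> c" "subseq [a,b,a,c] (y@[v])" by blast
    from snoc4[OF abc(3)] show False
    proof
      assume "subseq [a,b,a,c] y" then show False using h abc unfolding noA_def by blast
    next
      assume "c = v \<and> subseq [a,b,a] y" then show False using h abc by blast
    qed
  qed
qed

lemma noB_snoc: "noB (y@[v]) \<longleftrightarrow> noB y \<and> \<not>(\<exists>a c. a < v \<and> (c = a \<or> v < c) \<and> subseq [a,v,c] y)"
proof
  assume h: "noB (y@[v])"
  have "noB y" unfolding noB_def
  proof
    assume "\<exists>a b c. a < b \<and> (c = a \<or> b < c) \<and> subseq [a,b,c,b] y"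
    then obtain a b c where "a < b" "c = a \<or> b < c" "subseq [a,b,c,b] y" by blast
    then show False using h sub_app[of "[a,b,c,b]" y v] unfolding noB_def by blast
  qed
  moreover have "\<not>(\<exists>a c. a < v \<and> (c = a \<or> v < c) \<and> subseq [a,v,c] y)"
  proof
    assume "\<exists>a c. a < v \<and> (c = a \<or> v < c) \<and> subseq [a,v,c] y"
    then obtain a c where "a < v" "c = a \<or> v < c" "subseq [a,v,c] y" by blast
    then show False using h sub_4[of a v c y v] unfolding noB_def by blast
  qed
  ultimately show "noB y \<and> \<not>(\<exists>a c. a < v \<and> (c = a \<or> v < c) \<and> subseq [a,v,c] y)" by blast
next
  assume h: "noB y \<and> \<not>(\<exists>a c. a < v \<and> (c = a \<or> v < c) \<and> subseq [a,v,c] y)"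
  show "noB (y@[v])" unfolding noB_def
  proof
    assume "\<exists>a b c. a < b \<and> (c = a \<or> b < c) \<and> subseq [a,b,c,b] (y@[v])"
    then obtain a b c where abc: "a < b" "c = a \<or> b < c" "subseq [a,b,c,b] (y@[v])" by blast
    from snoc4[OF abc(3)] show False
    proof
      assume "subseq [a,b,c,b] y" then show False using h abc unfolding noB_def by blast
    next
      assume "b = v \<and> subseq [a,b,c] y" then show False using h abc by blast
    qed
  qed
qed

lemma noA_single: "noA [v]" unfolding noA_def by (auto dest: list_emb_length)
lemma noB_single: "noB [v]" unfolding noB_def by (auto dest: list_emb_length)

inductive stepB :: "nat list \<Rightarrow> bool" where
  B0: "stepB [0]"
| BS: "stepB y \<Longrightarrow> v = 0 \<or> v = last y \<or> v = Suc (Max (set y)) \<Longrightarrow> stepB (y@[v])"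

definition invB :: "nat list \<Rightarrow> bool" where
  "invB y \<longleftrightarrow> ascent_seq y \<and> noB y \<and> y \<noteq> [] \<and> hd y = 0 \<and> asc y = Max (set y)
    \<and> (last y = 0 \<or> last y = Max (set y))
    \<and> (\<forall>u. 1 \<le> u \<and> u \<le> Max (set y) \<longrightarrow> subseq [0,u] y)
    \<and> (last y = 0 \<longrightarrow> (\<forall>u. 1 \<le> u \<and> u \<le> Max (set y) \<longrightarrow> subseq [0,u,0] y))
    \<and> (0 < last y \<longrightarrow> (\<forall>u. 1 \<le> u \<and> u < Max (set y) \<longrightarrow> subseq [0,u,Max (set y)] y)
         \<and> \<not>(\<exists>a. a < Max (set y) \<and> subseq [a, Max (set y), a] y))"

lemma invB_base: "invB [0]"
  unfolding invB_def by (auto simp: ascent_single noB_single asc_def)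

lemma invB_step:
  assumes I: "invB y" and v: "v = 0 \<or> v = last y \<or> v = Suc (Max (set y))"
  shows "invB (y@[v])"
proof -
  define m where "m = Max (set y)"
  define L where "L = last y"
  have ne: "y \<noteq> []" and asc: "asc y = m" and hd: "hd y = 0" and ascs: "ascent_seq y"
    and nb: "noB y" and Lm: "L = 0 \<or> L = m"
    and s0: "\<And>u. 1 \<le> u \<Longrightarrow> u \<le> m \<Longrightarrow> subseq [0,u] y"
    and s1: "L = 0 \<Longrightarrow> 1 \<le> u \<Longrightarrow> u \<le> m \<Longrightarrow> subseq [0,u,0] y"
    and s2: "0 < L \<Longrightarrow> 1 \<le> u \<Longrightarrow> u < m \<Longrightarrow> subseq [0,u,m] y"
    and s3: "0 < L \<Longrightarrow> \<not>(\<exists>a. a < m \<and> subseq [a, m, a] y)"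
    for u
    using I unfolding invB_def m_def L_def by auto
  have Lin: "L \<in> set y" using ne unfolding L_def by simp
  have Lle: "L \<le> m" using Lin unfolding m_def by simp
  have Min: "\<And>u. u \<in> set y \<Longrightarrow> u \<le> m" unfolding m_def by simp
  have zin: "subseq [0] y" using ne hd by (cases y) (auto simp: subseq_singleton_left)
  have hdx: "hd (y@[v]) = 0" using ne hd by simp
  consider (Z) "v = 0" | (L) "v \<noteq> 0" "v = L" | (N) "v = Suc m"
    using v unfolding m_def L_def by blast
  then show ?thesis
  proof cases
    case Z
    have Mx: "Max (set (y@[v])) = m" using ne Z unfolding m_def by simp
    have ax: "asc (y@[v]) = m" using asc_snoc[OF ne, of v] Z asc by simp
    have asx: "ascent_seq (y@[v])" using ascent_snoc[OF ne] ascs Z by simp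
    have nbx: "noB (y@[v])" using noB_snoc nb Z by simp
    show ?thesis unfolding invB_def Mx
      using ne hdx ax asx nbx Z s0 by (auto intro: sub_app sub_3)
  next
    case L
    then have Lp: "0 < L" and Lm': "L = m" using Lm by auto
    have Mx: "Max (set (y@[v])) = m" using ne L Lle unfolding m_def by simp
    have ax: "asc (y@[v]) = m" using asc_snoc[OF ne, of v] L asc unfolding L_def by simp
    have asx: "ascent_seq (y@[v])" using ascent_snoc[OF ne] ascs L Lle asc by simp
    have nbx: "noB (y@[v])"
    proof -
      have "\<not>(\<exists>a c. a < v \<and> (c = a \<or> v < c) \<and> subseq [a,v,c] y)"
      proof
        assume "\<exists>a c. a < v \<and> (c = a \<or> v < c) \<and> subseq [a,v,c] y"
        then obtain a c where ac: "a < v" "c = a \<or> v < c" "subseq [a,v,c] y" by blast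
        show False
        proof (cases "c = a")
          case True
          then show False using s3[OF Lp] ac L Lm' by auto
        next
          case False
          then have "v < c" using ac by simp
          moreover have "c \<in> set y" using subseq_mem[OF ac(3)] by simp
          ultimately show False using Min L Lm' by fastforce
        qed
      qed
      then show ?thesis using noB_snoc nb by simp
    qed
    have s3x: "\<not>(\<exists>a. a < m \<and> subseq [a, m, a] (y@[v]))"
    proof
      assume "\<exists>a. a < m \<and> subseq [a, m, a] (y@[v])"
      then obtain a where a: "a < m" "subseq [a,m,a] (y@[v])" by blast
      from snoc3[OF a(2)] show False using s3[OF Lp] a L Lm' by auto
    qed
    show ?thesis unfolding invB_def Mx
      using ne hdx ax asx nbx L Lm' Lp s0 s2 s3x by (auto intro: sub_app)
  next
    case N
    have Mx: "Max (set (y@[v])) = Suc m" using ne N unfolding m_def by simp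
    have ax: "asc (y@[v]) = Suc m" using asc_snoc[OF ne, of v] N asc Lle unfolding L_def by simp
    have asx: "ascent_seq (y@[v])" using ascent_snoc[OF ne] ascs N asc by simp
    have notin: "Suc m \<notin> set y" using Min by fastforce
    have nbx: "noB (y@[v])"
    proof -
      have "\<not>(\<exists>a c. a < v \<and> (c = a \<or> v < c) \<and> subseq [a,v,c] y)"
        using notin N subseq_mem by fastforce
      then show ?thesis using noB_snoc nb by simp
    qed
    have s0x: "subseq [0,u] (y@[v])" if "1 \<le> u" "u \<le> Suc m" for u
    proof (cases "u \<le> m")
      case True then show ?thesis using s0 that sub_app by blast
    next
      case False then have "u = v" using that N by simp
      then show ?thesis using sub_2[OF zin] by simp
    qed
    have s2x: "subseq [0,u,Suc m] (y@[v])" if "1 \<le> u" "u < Suc m" for u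
      using s0[of u] that sub_3 N by simp
    have s3x: "\<not>(\<exists>a. a < Suc m \<and> subseq [a, Suc m, a] (y@[v]))"
    proof
      assume "\<exists>a. a < Suc m \<and> subseq [a, Suc m, a] (y@[v])"
      then obtain a where a: "a < Suc m" "subseq [a,Suc m,a] (y@[v])" by blast
      from snoc3[OF a(2)] show False
      proof
        assume "subseq [a, Suc m, a] y" then show False using subseq_mem notin by fastforce
      next
        assume "a = v \<and> subseq [a, Suc m] y" then show False using a N by simp
      qed
    qed
    show ?thesis unfolding invB_def Mx
      using ne hdx ax asx nbx N s0x s2x s3x by auto
  qed
qed

lemma stepB_inv: "stepB y \<Longrightarrow> invB y"
  by (induction rule: stepB.induct) (auto intro: invB_base invB_step)

lemma stepB_complete: "ascent_seq x \<Longrightarrow> noB x \<Longrightarrow> stepB x"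
proof (induction x rule: rev_induct)
  case Nil then show ?case by (simp add: ascent_seq_def)
next
  case (snoc v y)
  show ?case
  proof (cases "y = []")
    case True
    then show ?thesis using snoc.prems ascent_single stepB.B0 by auto
  next
    case False
    have ay: "ascent_seq y" and vb: "v \<le> 1 + asc y" using snoc.prems ascent_snoc[OF False] by auto
    have nby: "noB y" and nbv: "\<not>(\<exists>a c. a < v \<and> (c = a \<or> v < c) \<and> subseq [a,v,c] y)"
      using snoc.prems noB_snoc by auto
    have sy: "stepB y" using snoc.IH ay nby by blast
    have I: "invB y" using stepB_inv[OF sy] .
    define m where "m = Max (set y)"
    have asc: "asc y = m" and Lm: "last y = 0 \<or> last y = m"
    and s1: "\<And>u. last y = 0 \<Longrightarrow> 1 \<le> u \<Longrightarrow> u \<le> m \<Longrightarrow> subseq [0,u,0] y"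
    and s2: "\<And>u. 0 < last y \<Longrightarrow> 1 \<le> u \<Longrightarrow> u < m \<Longrightarrow> subseq [0,u,m] y"
      using I unfolding invB_def m_def by auto
    have "v = 0 \<or> v = last y \<or> v = Suc m"
    proof (rule ccontr)
      assume c: "\<not> (v = 0 \<or> v = last y \<or> v = Suc m)"
      then have v1: "1 \<le> v" "v \<le> m" using vb asc by auto
      show False
      proof (cases "last y = 0")
        case True
        then show False using s1[OF True v1] nbv v1 by auto
      next
        case False
        then have "last y = m" using Lm by simp
        then have "v < m" using c v1 by simp
        then show False using s2[of v] False v1 nbv by auto
      qed
    qed
    then show ?thesis using stepB.BS[OF sy] unfolding m_def by blast
  qed
qed

lemma charB: "(ascent_seq x \<and> noB x) \<longleftrightarrow> stepB x"
  using stepB_complete stepB_inv unfolding invB_def by blast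

inductive stepA :: "nat list \<Rightarrow> bool" where
  A0: "stepA [0]"
| AS: "stepA y \<Longrightarrow> v \<le> (if sorted y then Suc (last y) else last y) \<Longrightarrow> stepA (y@[v])"

definition invA :: "nat list \<Rightarrow> bool" where
  "invA y \<longleftrightarrow> ascent_seq y \<and> noA y \<and> y \<noteq> [] \<and> hd y = 0 \<and> asc y = Max (set y)
    \<and> (sorted y \<longrightarrow> last y = Max (set y))
    \<and> (\<forall>a. a < Max (set y) \<longrightarrow> subseq [a, Suc a] y)
    \<and> (\<not> sorted y \<longrightarrow> subseq [last y, Suc (last y), last y] y
         \<and> \<not>(\<exists>a b. a < b \<and> b \<le> last y \<and> subseq [a,b,a] y))"

lemma invA_base: "invA [0]"
  unfolding invA_def by (auto simp: ascent_single noA_single asc_def)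

lemma sorted_no_aba: "sorted y \<Longrightarrow> a < b \<Longrightarrow> \<not> subseq [a,b,a] y"
  using sorted_subseq[of "[a,b,a]" y] by auto

lemma invA_step:
  assumes I: "invA y" and v: "v \<le> (if sorted y then Suc (last y) else last y)"
  shows "invA (y@[v])"
proof -
  define m where "m = Max (set y)"
  define L where "L = last y"
  have ne: "y \<noteq> []" and asc: "asc y = m" and hd: "hd y = 0" and ascs: "ascent_seq y"
    and na: "noA y" and sL: "sorted y \<Longrightarrow> L = m"
    and s0: "\<And>a. a < m \<Longrightarrow> subseq [a, Suc a] y"
    and s1: "\<not> sorted y \<Longrightarrow> subseq [L, Suc L, L] y"
    and s2: "\<not> sorted y \<Longrightarrow> \<not>(\<exists>a b. a < b \<and> b \<le> L \<and> subseq [a,b,a] y)"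
    using I unfolding invA_def m_def L_def by auto
  have Lin: "L \<in> set y" using ne unfolding L_def by simp
  have Lle: "L \<le> m" using Lin unfolding m_def by simp
  have Min: "\<And>u. u \<in> set y \<Longrightarrow> u \<le> m" unfolding m_def by simp
  have min: "m \<in> set y" using ne unfolding m_def by simp
  have hdx: "hd (y@[v]) = 0" using ne hd by simp
  have srt: "sorted (y@[v]) \<longleftrightarrow> sorted y \<and> (\<forall>x\<in>set y. x \<le> v)" by (simp add: sorted_append)
  consider (S1) "sorted y" "L \<le> v" | (S2) "sorted y" "v < L" | (U) "\<not> sorted y"
    by linarith
  then show ?thesis
  proof cases
    case S1
    then have vle: "v \<le> Suc m" using v sL unfolding L_def by simp
    have sx: "sorted (y@[v])" using srt S1 Min sL by fastforce
    have Mx: "Max (set (y@[v])) = v" using ne S1 sL unfolding m_def by simp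
    have ax: "asc (y@[v]) = v" using asc_snoc[OF ne, of v] S1 sL asc vle unfolding L_def by auto
    have asx: "ascent_seq (y@[v])" using ascent_snoc[OF ne] ascs vle asc by simp
    have nax: "noA (y@[v])" using noA_snoc na sorted_no_aba[OF S1(1)] by blast
    have s0x: "subseq [a, Suc a] (y@[v])" if "a < v" for a
    proof (cases "a < m")
      case True then show ?thesis using s0 sub_app by blast
    next
      case False then have "a = m" "v = Suc m" using that vle by auto
      then show ?thesis using sub_2[of m y v] min by (simp add: subseq_singleton_left)
    qed
    show ?thesis unfolding invA_def Mx using ne hdx ax asx nax sx s0x by auto
  next
    case S2
    have nsx: "\<not> sorted (y@[v])" using srt S2 Lin by fastforce
    have Mx: "Max (set (y@[v])) = m" using ne S2 Lle unfolding m_def by simp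
    have ax: "asc (y@[v]) = m" using asc_snoc[OF ne, of v] S2 asc unfolding L_def by auto
    have asx: "ascent_seq (y@[v])" using ascent_snoc[OF ne] ascs S2 Lle asc by simp
    have nax: "noA (y@[v])" using noA_snoc na sorted_no_aba[OF S2(1)] by blast
    have s1x: "subseq [v, Suc v, v] (y@[v])" using s0[of v] S2 Lle sub_3 by simp
    have s2x: "\<not>(\<exists>a b. a < b \<and> b \<le> v \<and> subseq [a,b,a] (y@[v]))"
    proof
      assume "\<exists>a b. a < b \<and> b \<le> v \<and> subseq [a,b,a] (y@[v])"
      then obtain a b where ab: "a < b" "b \<le> v" "subseq [a,b,a] (y@[v])" by blast
      from snoc3[OF ab(3)] show False using sorted_no_aba[OF S2(1) ab(1)] ab by auto
    qed
    show ?thesis unfolding invA_def Mx using ne hdx ax asx nax nsx s0 s1x s2x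
      by (auto intro: sub_app)
  next
    case U
    then have vL: "v \<le> L" using v unfolding L_def by simp
    have nsx: "\<not> sorted (y@[v])" using srt U by simp
    have Mx: "Max (set (y@[v])) = m" using ne vL Lle unfolding m_def by simp
    have ax: "asc (y@[v]) = m" using asc_snoc[OF ne, of v] vL asc unfolding L_def by auto
    have asx: "ascent_seq (y@[v])" using ascent_snoc[OF ne] ascs vL Lle asc by simp
    have nax: "noA (y@[v])" using noA_snoc na s2[OF U] vL by fastforce
    have s1x: "subseq [v, Suc v, v] (y@[v])"
    proof (cases "v = L")
      case True then show ?thesis using s1[OF U] sub_app by simp
    next
      case False then show ?thesis using s0[of v] vL Lle sub_3 by simp
    qed
    have s2x: "\<not>(\<exists>a b. a < b \<and> b \<le> v \<and> subseq [a,b,a] (y@[v]))"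
    proof
      assume "\<exists>a b. a < b \<and> b \<le> v \<and> subseq [a,b,a] (y@[v])"
      then obtain a b where ab: "a < b" "b \<le> v" "subseq [a,b,a] (y@[v])" by blast
      from snoc3[OF ab(3)] show False using s2[OF U] vL ab by auto
    qed
    show ?thesis unfolding invA_def Mx using ne hdx ax asx nax nsx s0 s1x s2x
      by (auto intro: sub_app)
  qed
qed

lemma stepA_inv: "stepA y \<Longrightarrow> invA y"
  by (induction rule: stepA.induct) (auto intro: invA_base invA_step)

lemma stepA_complete: "ascent_seq x \<Longrightarrow> noA x \<Longrightarrow> stepA x"
proof (induction x rule: rev_induct)
  case Nil then show ?case by (simp add: ascent_seq_def)
next
  case (snoc v y)
  show ?case
  proof (cases "y = []")
    case True
    then show ?thesis using snoc.prems ascent_single stepA.A0 by auto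
  next
    case False
    have ay: "ascent_seq y" and vb: "v \<le> 1 + asc y" using snoc.prems ascent_snoc[OF False] by auto
    have nay: "noA y" and nav: "\<not>(\<exists>a b. a < b \<and> b \<le> v \<and> subseq [a,b,a] y)"
      using snoc.prems noA_snoc by auto
    have sy: "stepA y" using snoc.IH ay nay by blast
    have I: "invA y" using stepA_inv[OF sy] .
    have asc: "asc y = Max (set y)" and sL: "sorted y \<Longrightarrow> last y = Max (set y)"
      and s1: "\<not> sorted y \<Longrightarrow> subseq [last y, Suc (last y), last y] y"
      using I unfolding invA_def by auto
    have "v \<le> (if sorted y then Suc (last y) else last y)"
    proof (cases "sorted y")
      case True then show ?thesis using sL vb asc by simp
    next
      case False
      show ?thesis
      proof (rule ccontr)
        assume "\<not> ?thesis"
        then have "Suc (last y) \<le> v" using False by simp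
        then show False using nav s1[OF False] by blast
      qed
    qed
    then show ?thesis using stepA.AS[OF sy] by blast
  qed
qed

lemma charA: "(ascent_seq x \<and> noA x) \<longleftrightarrow> stepA x"
  using stepA_complete stepA_inv unfolding invA_def by blast

lemma stepA_ne: "stepA x \<Longrightarrow> x \<noteq> [] \<and> hd x = 0"
  using stepA_inv unfolding invA_def by blast

lemma stepB_ne: "stepB x \<Longrightarrow> x \<noteq> [] \<and> hd x = 0"
  using stepB_inv unfolding invB_def by blast

lemma stepA_Cons0: "stepA y \<Longrightarrow> stepA (0#y)"
proof (induction rule: stepA.induct)
  case A0
  show ?case using stepA.AS[OF stepA.A0, of 0] by simp
next
  case (AS y v)
  have ne: "y \<noteq> []" using stepA_ne[OF AS.hyps(1)] by simp
  have "v \<le> (if sorted (0#y) then Suc (last (0#y)) else last (0#y))" using AS.hyps(2) ne by (auto split: if_splits)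
  from stepA.AS[OF AS.IH this] show ?case by simp
qed

lemma stepA_shift: "stepA w \<Longrightarrow> stepA (0 # map Suc w)"
proof (induction rule: stepA.induct)
  case A0
  show ?case using stepA.AS[OF stepA.A0, of 1] by simp
next
  case (AS w v)
  have ne: "w \<noteq> []" using stepA_ne[OF AS.hyps(1)] by simp
  have s: "sorted (0 # map Suc w) \<longleftrightarrow> sorted w" by (simp add: sorted_map)
  have l: "last (0 # map Suc w) = Suc (last w)" using ne by (simp add: last_map)
  have "Suc v \<le> (if sorted (0 # map Suc w) then Suc (last (0 # map Suc w)) else last (0 # map Suc w))"
    using AS.hyps(2) s l by (auto split: if_splits)
  from stepA.AS[OF AS.IH this] show ?case by simp
qed

lemma stepA_rep: "stepA y \<Longrightarrow> stepA (y @ replicate j 0)"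
proof (induction j)
  case 0 then show ?case by simp
next
  case (Suc j)
  have "stepA ((y @ replicate j 0) @ [0])" using stepA.AS[OF Suc.IH[OF Suc.prems], of 0] by simp
  moreover have "(y @ replicate j 0) @ [0] = y @ replicate (Suc j) 0" by (simp add: replicate_append_same)
  ultimately show ?case by simp
qed

lemma sorted_le_last: "sorted xs \<Longrightarrow> x \<in> set xs \<Longrightarrow> x \<le> last xs"
proof (induction xs)
  case Nil then show ?case by simp
next
  case (Cons a xs)
  show ?case
  proof (cases "xs = []")
    case True then show ?thesis using Cons by simp
  next
    case False
    then have "last xs \<in> set xs" by simp
    then show ?thesis using Cons False by auto
  qed
qed

lemma stepA_decomp:
  "stepA x \<Longrightarrow> 2 \<le> length x \<Longrightarrow>
     (\<exists>y. x = 0#y \<and> stepA y) \<or> (\<exists>w j. x = 0 # map Suc w @ replicate j 0 \<and> stepA w)"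
proof (induction rule: stepA.induct)
  case A0 then show ?case by simp
next
  case (AS y v)
  have ne: "y \<noteq> []" and hy: "hd y = 0" using stepA_ne[OF AS.hyps(1)] by auto
  show ?case
  proof (cases "length y < 2")
    case True
    then have "y = [0]" using ne hy by (cases y) auto
    then have "v \<le> 1" using AS.hyps(2) by simp
    then consider "v = 0" | "v = 1" by linarith
    then show ?thesis
    proof cases
      case 1 then show ?thesis using \<open>y = [0]\<close> stepA.A0 by auto
    next
      case 2
      then have "y @ [v] = 0 # map Suc [0] @ replicate 0 0" using \<open>y = [0]\<close> by simp
      then show ?thesis using stepA.A0 by blast
    qed
  next
    case False
    then have "2 \<le> length y" by simp
    from AS.IH[OF this] show ?thesis
    proof
      assume "\<exists>y'. y = 0 # y' \<and> stepA y'"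
      then obtain y' where y': "y = 0 # y'" "stepA y'" by blast
      have ne': "y' \<noteq> []" using stepA_ne[OF y'(2)] by simp
      have "v \<le> (if sorted y' then Suc (last y') else last y')" using AS.hyps(2) y' ne' by (auto split: if_splits)
      then have "stepA (y'@[v])" using stepA.AS[OF y'(2)] by blast
      then show ?thesis using y' by simp
    next
      assume "\<exists>w j. y = 0 # map Suc w @ replicate j 0 \<and> stepA w"
      then obtain w j where wj: "y = 0 # map Suc w @ replicate j 0" "stepA w" by blast
      have nw: "w \<noteq> []" and hw: "hd w = 0" using stepA_ne[OF wj(2)] by auto
      show ?thesis
      proof (cases j)
        case 0
        then have y0: "y = 0 # map Suc w" using wj by simp
        have s: "sorted y \<longleftrightarrow> sorted w" using y0 by (simp add: sorted_map)
        have l: "last y = Suc (last w)" using y0 nw by (simp add: last_map)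
        show ?thesis
        proof (cases v)
          case 0
          then have "y @ [v] = 0 # map Suc w @ replicate 1 0" using y0 by simp
          then show ?thesis using wj(2) by blast
        next
          case (Suc v')
          then have "v' \<le> (if sorted w then Suc (last w) else last w)"
            using AS.hyps(2) s l by (auto split: if_splits)
          then have "stepA (w@[v'])" using stepA.AS[OF wj(2)] by blast
          moreover have "y @ [v] = 0 # map Suc (w@[v']) @ replicate 0 0" using y0 Suc by simp
          ultimately show ?thesis by blast
        qed
      next
        case (Suc j')
        then have y1: "y = (0 # map Suc w @ replicate j' 0) @ [0]" using wj by (simp add: replicate_append_same)
        then have ly: "last y = 0" by simp
        have "Suc (hd w) \<in> set y" using y1 nw by (cases w) auto
        then have ns: "\<not> sorted y" using sorted_le_last[of y "Suc (hd w)"] ly by auto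
        then have "v = 0" using AS.hyps(2) ly by simp
        then have "y @ [v] = 0 # map Suc w @ replicate (Suc j) 0" using wj by (simp add: replicate_append_same)
        then show ?thesis using wj(2) by blast
      qed
    qed
  qed
qed

definition SA :: "nat \<Rightarrow> nat list set" where "SA n = {x. stepA x \<and> length x = n}"
definition EA :: "nat \<Rightarrow> nat list set" where
  "EA n = {x. \<exists>w j. x = 0 # map Suc w @ replicate j 0 \<and> stepA w \<and> length w + j = n}"

lemma SA_Suc: assumes "1 \<le> n" shows "SA (Suc n) = Cons 0 ` SA n \<union> EA n"
proof
  show "SA (Suc n) \<subseteq> Cons 0 ` SA n \<union> EA n"
  proof
    fix x assume "x \<in> SA (Suc n)"
    then have x: "stepA x" "length x = Suc n" by (auto simp: SA_def)
    then have "2 \<le> length x" using assms by simp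
    from stepA_decomp[OF x(1) this] show "x \<in> Cons 0 ` SA n \<union> EA n"
    proof
      assume "\<exists>y. x = 0 # y \<and> stepA y"
      then obtain y where "x = 0 # y" "stepA y" by blast
      then show ?thesis using x(2) by (auto simp: SA_def)
    next
      assume "\<exists>w j. x = 0 # map Suc w @ replicate j 0 \<and> stepA w"
      then obtain w j where "x = 0 # map Suc w @ replicate j 0" "stepA w" by blast
      then show ?thesis using x(2) unfolding EA_def by auto
    qed
  qed
next
  show "Cons 0 ` SA n \<union> EA n \<subseteq> SA (Suc n)"
  proof
    fix x assume "x \<in> Cons 0 ` SA n \<union> EA n"
    then show "x \<in> SA (Suc n)"
    proof
      assume "x \<in> Cons 0 ` SA n"
      then show ?thesis by (auto simp: SA_def intro: stepA_Cons0)
    next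
      assume "x \<in> EA n"
      then obtain w j where wj: "x = 0 # map Suc w @ replicate j 0" "stepA w" "length w + j = n"
        unfolding EA_def by blast
      have "stepA ((0 # map Suc w) @ replicate j 0)" by (rule stepA_rep[OF stepA_shift[OF wj(2)]])
      then show ?thesis using wj by (simp add: SA_def)
    qed
  qed
qed

lemma EA_Suc: "EA (Suc n) = (\<lambda>x. x@[0]) ` EA n \<union> (\<lambda>w. 0 # map Suc w) ` SA (Suc n)"
proof
  show "EA (Suc n) \<subseteq> (\<lambda>x. x@[0]) ` EA n \<union> (\<lambda>w. 0 # map Suc w) ` SA (Suc n)"
  proof
    fix x assume "x \<in> EA (Suc n)"
    then obtain w j where wj: "x = 0 # map Suc w @ replicate j 0" "stepA w" "length w + j = Suc n"
      unfolding EA_def by blast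
    show "x \<in> (\<lambda>x. x@[0]) ` EA n \<union> (\<lambda>w. 0 # map Suc w) ` SA (Suc n)"
    proof (cases j)
      case 0
      then show ?thesis using wj by (auto simp: SA_def)
    next
      case (Suc j')
      then have "x = (0 # map Suc w @ replicate j' 0) @ [0]" using wj by (simp add: replicate_append_same)
      moreover have "0 # map Suc w @ replicate j' 0 \<in> EA n" using wj Suc unfolding EA_def by auto
      ultimately show ?thesis by blast
    qed
  qed
next
  show "(\<lambda>x. x@[0]) ` EA n \<union> (\<lambda>w. 0 # map Suc w) ` SA (Suc n) \<subseteq> EA (Suc n)"
  proof
    fix x assume "x \<in> (\<lambda>x. x@[0]) ` EA n \<union> (\<lambda>w. 0 # map Suc w) ` SA (Suc n)"
    then show "x \<in> EA (Suc n)"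
    proof
      assume "x \<in> (\<lambda>x. x@[0]) ` EA n"
      then obtain w j where wj: "x = (0 # map Suc w @ replicate j 0) @ [0]" "stepA w" "length w + j = n"
        unfolding EA_def by blast
      then have "x = 0 # map Suc w @ replicate (Suc j) 0" by (simp add: replicate_append_same)
      then show ?thesis using wj unfolding EA_def by fastforce
    next
      assume "x \<in> (\<lambda>w. 0 # map Suc w) ` SA (Suc n)"
      then obtain w where "x = 0 # map Suc w @ replicate 0 0" "stepA w" "length w + 0 = Suc n"
        by (auto simp: SA_def)
      then show ?thesis unfolding EA_def by blast
    qed
  qed
qed

lemma SA_0: "SA 0 = {}" using stepA_ne by (auto simp: SA_def)
lemma EA_0: "EA 0 = {}" using stepA_ne by (auto simp: EA_def)
lemma SA_1: "SA (Suc 0) = {[0]}"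
proof
  show "SA (Suc 0) \<subseteq> {[0]}"
  proof
    fix x assume "x \<in> SA (Suc 0)"
    then have sx: "stepA x" and "length x = 1" by (auto simp: SA_def)
    then obtain a where "x = [a]" by (auto simp: length_Suc_conv)
    then show "x \<in> {[0]}" using stepA_ne[OF sx] by simp
  qed
qed (auto simp: SA_def intro: stepA.A0)

lemma disjA1: "Cons 0 ` SA n \<inter> EA n = {}"
proof -
  have False if "0 # y = 0 # map Suc w @ replicate j 0" "stepA y" "stepA w" for y w j
  proof -
    have "hd y = 0" "w \<noteq> []" using stepA_ne that by auto
    then show False using that(1) by (cases w) auto
  qed
  then show ?thesis unfolding SA_def EA_def by blast
qed

lemma disjA2: "(\<lambda>x. x@[0]) ` EA n \<inter> (\<lambda>w. 0 # map Suc w) ` SA (Suc n) = {}"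
proof -
  have False if "x @ [0] = 0 # map Suc w" "stepA w" for x w
  proof -
    have "w \<noteq> []" using stepA_ne that by auto
    then have "last (0 # map Suc w) = Suc (last w)" by (simp add: last_map)
    then show False using arg_cong[OF that(1), of last] by simp
  qed
  then show ?thesis unfolding SA_def by blast
qed

lemma finA: "finite (SA n) \<and> finite (EA n)"
proof (induction n)
  case 0 then show ?case by (simp add: SA_0 EA_0)
next
  case (Suc n)
  have f: "finite (SA (Suc n))"
  proof (cases n)
    case 0 then show ?thesis by (simp add: SA_1)
  next
    case (Suc k)
    then show ?thesis using SA_Suc[of n] Suc.IH by simp
  qed
  then show ?case using EA_Suc[of n] Suc.IH by simp
qed

lemma cardA: "1 \<le> n \<Longrightarrow> card (SA (Suc n)) = card (SA n) + card (EA n)"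
proof -
  assume n: "1 \<le> n"
  have "card (SA (Suc n)) = card (Cons 0 ` SA n) + card (EA n)"
    using SA_Suc[OF n] disjA1[of n] finA[of n] by (simp add: card_Un_disjoint)
  also have "card (Cons 0 ` SA n) = card (SA n)" by (rule card_image) (simp add: inj_on_def)
  finally show ?thesis .
qed

lemma cardE: "card (EA (Suc n)) = card (EA n) + card (SA (Suc n))"
proof -
  have "card (EA (Suc n)) = card ((\<lambda>x. x@[0]) ` EA n) + card ((\<lambda>w. 0 # map Suc w) ` SA (Suc n))"
    using EA_Suc[of n] disjA2[of n] finA[of n] finA[of "Suc n"] by (simp add: card_Un_disjoint)
  also have "card ((\<lambda>x. x@[0]) ` EA n) = card (EA n)" by (rule card_image) (simp add: inj_on_def)
  also have "card ((\<lambda>w. 0 # map Suc w) ` SA (Suc n)) = card (SA (Suc n))"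
    by (rule card_image) (simp add: inj_on_def inj_map_eq_map)
  finally show ?thesis .
qed

lemma fibA: "1 \<le> n \<Longrightarrow> card (SA n) = fib (2*n - 1) \<and> card (EA n) = fib (2*n)"
proof (induction n rule: nat_induct_at_least)
  case base
  have "card (SA 1) = 1" by (simp add: SA_1)
  moreover have "card (EA 1) = 1" using cardE[of 0] by (simp add: EA_0 SA_1)
  ultimately show ?case by simp
next
  case (Suc n)
  obtain k where k: "n = Suc k" using Suc.hyps by (cases n) auto
  have "card (SA (Suc n)) = fib (2*n - 1) + fib (2*n)" using cardA[OF Suc.hyps] Suc.IH by simp
  also have "\<dots> = fib (2 * Suc n - 1)" using k by simp
  finally have a: "card (SA (Suc n)) = fib (2 * Suc n - 1)" .
  have "card (EA (Suc n)) = fib (2*n) + fib (2 * Suc n - 1)" using cardE[of n] Suc.IH a by simp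
  also have "\<dots> = fib (2 * Suc n)" using k by simp
  finally show ?case using a by simp
qed

definition SB :: "nat \<Rightarrow> nat list set" where "SB n = {x. stepB x \<and> length x = n}"
definition PB :: "nat \<Rightarrow> nat list set" where "PB n = {x. stepB x \<and> length x = n \<and> last x \<noteq> 0}"

definition ap0 :: "nat list \<Rightarrow> nat list" where "ap0 y = y @ [0]"
definition nmx :: "nat list \<Rightarrow> nat list" where "nmx y = y @ [Suc (Max (set y))]"
definition rpl :: "nat list \<Rightarrow> nat list" where "rpl y = y @ [last y]"

lemma SB_Suc: assumes "1 \<le> n" shows "SB (Suc n) = ap0 ` SB n \<union> nmx ` SB n \<union> rpl ` PB n"
proof
  show "SB (Suc n) \<subseteq> ap0 ` SB n \<union> nmx ` SB n \<union> rpl ` PB n"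
  proof
    fix x assume "x \<in> SB (Suc n)"
    then have sx: "stepB x" and lx: "length x = Suc n" by (auto simp: SB_def)
    from sx show "x \<in> ap0 ` SB n \<union> nmx ` SB n \<union> rpl ` PB n"
    proof cases
      case B0 then show ?thesis using lx assms by simp
    next
      case (BS y v)
      have ly: "length y = n" using lx BS by simp
      consider "v = 0" | "v \<noteq> 0" "v = last y" | "v = Suc (Max (set y))" using BS by blast
      then show ?thesis
      proof cases
        case 1 then show ?thesis using BS ly by (auto simp: SB_def ap0_def)
      next
        case 2
        then have "y \<in> PB n" using BS ly by (simp add: PB_def)
        then show ?thesis using 2 BS by (auto simp: rpl_def)
      next
        case 3 then show ?thesis using BS ly by (auto simp: SB_def nmx_def)
      qed
    qed
  qed
next
  show "ap0 ` SB n \<union> nmx ` SB n \<union> rpl ` PB n \<subseteq> SB (Suc n)"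
    by (auto simp: SB_def PB_def ap0_def nmx_def rpl_def intro: stepB.BS)
qed

lemma PB_Suc: assumes "1 \<le> n" shows "PB (Suc n) = nmx ` SB n \<union> rpl ` PB n"
proof
  show "PB (Suc n) \<subseteq> nmx ` SB n \<union> rpl ` PB n"
  proof
    fix x assume "x \<in> PB (Suc n)"
    then have sx: "stepB x" and lx: "length x = Suc n" and l0: "last x \<noteq> 0" by (auto simp: PB_def)
    from sx show "x \<in> nmx ` SB n \<union> rpl ` PB n"
    proof cases
      case B0 then show ?thesis using lx assms by simp
    next
      case (BS y v)
      have ly: "length y = n" using lx BS by simp
      have v0: "v \<noteq> 0" using l0 BS by simp
      consider "v = last y" | "v = Suc (Max (set y))" using BS v0 by blast
      then show ?thesis
      proof cases
        case 1
        then have "y \<in> PB n" using BS ly v0 by (simp add: PB_def)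
        then show ?thesis using 1 BS by (auto simp: rpl_def)
      next
        case 2 then show ?thesis using BS ly by (auto simp: SB_def nmx_def)
      qed
    qed
  qed
next
  show "nmx ` SB n \<union> rpl ` PB n \<subseteq> PB (Suc n)"
    by (auto simp: SB_def PB_def nmx_def rpl_def intro: stepB.BS)
qed

lemma SB_0: "SB 0 = {}" using stepB_ne by (auto simp: SB_def)
lemma SB_1: "SB (Suc 0) = {[0]}"
proof
  show "SB (Suc 0) \<subseteq> {[0]}"
  proof
    fix x assume "x \<in> SB (Suc 0)"
    then have sx: "stepB x" and "length x = 1" by (auto simp: SB_def)
    then obtain a where "x = [a]" by (auto simp: length_Suc_conv)
    then show "x \<in> {[0]}" using stepB_ne[OF sx] by simp
  qed
qed (auto simp: SB_def intro: stepB.B0)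

lemma PB_1: "PB (Suc 0) = {}"
proof -
  have "PB (Suc 0) \<subseteq> SB (Suc 0)" by (auto simp: PB_def SB_def)
  then show ?thesis using SB_1 by (auto simp: PB_def)
qed

lemma finB: "finite (SB n) \<and> finite (PB n)"
proof (induction n)
  case 0 then show ?case using SB_0 by (auto simp: PB_def SB_def)
next
  case (Suc n)
  have f: "finite (SB (Suc n))"
  proof (cases n)
    case 0 then show ?thesis by (simp add: SB_1)
  next
    case (Suc k)
    then show ?thesis using SB_Suc[of n] Suc.IH by simp
  qed
  have "PB (Suc n) \<subseteq> SB (Suc n)" by (auto simp: PB_def SB_def)
  then show ?case using f finite_subset by blast
qed

lemma Max_last: "y \<noteq> [] \<Longrightarrow> last y \<le> Max (set y)"
  by simp

lemma disjB1: "ap0 ` SB n \<inter> nmx ` SB n = {}"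
  by (auto simp: ap0_def nmx_def)

lemma disjB2: "(ap0 ` SB n \<union> nmx ` SB n) \<inter> rpl ` PB n = {}"
proof -
  have False if "last y = Suc (Max (set y))" "stepB y" for y
  proof -
    have "y \<noteq> []" using stepB_ne that by auto
    then have "last y \<le> Max (set y)" by (rule Max_last)
    then show False using that(1) by linarith
  qed
  then show ?thesis by (auto simp: ap0_def nmx_def rpl_def PB_def SB_def)
qed

lemma disjB3: "nmx ` SB n \<inter> rpl ` PB n = {}"
  using disjB2[of n] by blast

lemma inj_snoc: "inj_on (\<lambda>y. y @ [f y]) A"
  by (auto simp: inj_on_def)

lemma cardB: assumes "1 \<le> n"
  shows "card (SB (Suc n)) = 2 * card (SB n) + card (PB n)"
    and "card (PB (Suc n)) = card (SB n) + card (PB n)"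
proof -
  have c1: "card (ap0 ` SB n) = card (SB n)"
    by (rule card_image) (simp add: ap0_def inj_on_def)
  have c2: "card (nmx ` SB n) = card (SB n)"
    unfolding nmx_def by (rule card_image) (rule inj_snoc)
  have c3: "card (rpl ` PB n) = card (PB n)"
    unfolding rpl_def by (rule card_image) (rule inj_snoc)
  have f: "finite (SB n)" "finite (PB n)" using finB by auto
  show "card (SB (Suc n)) = 2 * card (SB n) + card (PB n)"
    using SB_Suc[OF assms] disjB1[of n] disjB2[of n] f c1 c2 c3
    by (simp add: card_Un_disjoint)
  show "card (PB (Suc n)) = card (SB n) + card (PB n)"
    using PB_Suc[OF assms] disjB3[of n] f c2 c3
    by (simp add: card_Un_disjoint)
qed

lemma fibB: "1 \<le> n \<Longrightarrow> card (SB n) = fib (2*n - 1) \<and> card (PB n) = fib (2*n - 2)"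
proof (induction n rule: nat_induct_at_least)
  case base
  show ?case by (simp add: SB_1 PB_1)
next
  case (Suc n)
  obtain k where k: "n = Suc k" using Suc.hyps by (cases n) auto
  have "card (SB (Suc n)) = 2 * fib (2*n - 1) + fib (2*n - 2)" using cardB(1)[OF Suc.hyps] Suc.IH by simp
  also have "\<dots> = fib (2 * Suc n - 1)" using k by simp
  finally have a: "card (SB (Suc n)) = fib (2 * Suc n - 1)" .
  have "card (PB (Suc n)) = fib (2*n - 1) + fib (2*n - 2)" using cardB(2)[OF Suc.hyps] Suc.IH by simp
  also have "\<dots> = fib (2 * Suc n - 2)" using k by simp
  finally show ?case using a by simp
qed

theorem theorem3p1:
  fixes n :: nat
  assumes "n \<ge> 1"
  shows "a_P {[0,1,0,1], [0,1,0,2]} n = fib (2 * n - 1)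
       \<and> a_P {[0,1,0,1], [0,1,2,1]} n = fib (2 * n - 1)"
proof
  have "{x. ascent_seq x \<and> length x = n \<and> (\<forall>p\<in>{[0,1,0,1], [0,1,0,2]}. avoids x p)} = SA n"
    unfolding SA_def avoidsA using charA by blast
  then show "a_P {[0,1,0,1], [0,1,0,2]} n = fib (2 * n - 1)"
    unfolding a_P_def using fibA[OF assms] by simp
next
  have "{x. ascent_seq x \<and> length x = n \<and> (\<forall>p\<in>{[0,1,0,1], [0,1,2,1]}. avoids x p)} = SB n"
    unfolding SB_def avoidsB using charB by blast
  then show "a_P {[0,1,0,1], [0,1,2,1]} n = fib (2 * n - 1)"
    unfolding a_P_def using fibB[OF assms] by simp
qed

end
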